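(* Let $\omega_s>0$, $R_s>0$, $R_r>0$, $L_s>0$, $L_r>0$, $L_m>0$ with $L_s>L_m$ and $L_r>L_m$, and let $\sigma=1-\frac{L_m^2}{L_sL_r}$. Let $$A=\begin{bmatrix} -\frac{R_s}{\sigma L_s} & \omega_s & \frac{R_sL_m}{\sigma L_sL_r} & 0 \\ -\omega_s & -\frac{R_s}{\sigma L_s} & 0 & \frac{R_sL_m}{\sigma L_sL_r}\\ \frac{R_rL_m}{\sigma L_sL_r} & 0 & -\frac{R_r}{\sigma L_r} & \omega_s \\ 0 & \frac{R_rL_m}{\sigma L_sL_r} & -\omega_s & -\frac{R_r}{\sigma L_r} \end{bmatrix},\qquad B=\begin{bmatrix}0_{2\times2}\\ I_{2\times 2}\end{bmatrix},$$ and let $K\in\mathbb{R}^{2\times 4}$ be any matrix such that $A-BK$ is asymptotically stable (all eigenvalues have negative real part). Write $(A-BK)^{-1}=[d_{ij}]_{i,j=1}^4$ and define $$q_1=\tfrac{L_m}{\sigma L_sL_r}(d_{13}d_{43}-d_{23}d_{33}),\quad q_2=\tfrac{1}{2}\tfrac{L_m}{\sigma L_sL_r}(d_{13}d_{44}+d_{14}d_{43}-d_{23}d_{34}-d_{24}d_{33}),\quad q_3=\tfrac{L_m}{\sigma L_sL_r}(d_{14}d_{44}-d_{24}d_{34}).$$ Then the matrix $\begin{bmatrix}q_1&q_2\\ q_2&q_3\end{bmatrix}$ is positive definite.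
   Context: This matrix is the Hessian (up to a factor 2) of the quadratic map $u=(u_1,u_2)\mapsto T_e(u)=\frac{L_m}{\sigma L_sL_r}(x_1x_4-x_2x_3)$, where $x=-(A-BK)^{-1}[v_{ds}\;v_{qs}\;u_1\;u_2]^T$ for fixed real constants $v_{ds},v_{qs}$; i.e. $T_e(u)=u^T\begin{bmatrix}q_1&q_2\\ q_2&q_3\end{bmatrix}u+b^Tu+a$ for some constants $b\in\mathbb{R}^2$, $a\in\mathbb{R}$. (This models the electromagnetic torque of a doubly fed induction generator at the steady state of its feedback-linearized electrical dynamics.) *)

theory Defs
  imports "HOL-Analysis.Analysis"
begin

definition complexify :: "real^'n^'m \<Rightarrow> complex^'n^'m" where
  "complexify M = (\<chi> i j. complex_of_real (M $ i $ j))"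

definition is_eigenvalue :: "real^'n^'n \<Rightarrow> complex \<Rightarrow> bool" where
  "is_eigenvalue M lam \<longleftrightarrow> det (mat lam - complexify M) = 0"

definition asymp_stable :: "real^'n^'n \<Rightarrow> bool" where
  "asymp_stable M \<longleftrightarrow> (\<forall>lam. is_eigenvalue M lam \<longrightarrow> Re lam < 0)"

definition pos_definite :: "real^'n^'n \<Rightarrow> bool" where
  "pos_definite Q \<longleftrightarrow> transpose Q = Q \<and> (\<forall>x. x \<noteq> 0 \<longrightarrow> x \<bullet> (Q *v x) > 0)"

definition dfig_A :: "real \<Rightarrow> real \<Rightarrow> real \<Rightarrow> real \<Rightarrow> real \<Rightarrow> real \<Rightarrow> real^4^4" where
  "dfig_A ws Rs Rr Ls Lr Lm =
     (let \<sigma> = 1 - Lm\<^sup>2 / (Ls * Lr) in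
      vector [
        vector [- Rs / (\<sigma> * Ls), ws, Rs * Lm / (\<sigma> * Ls * Lr), 0],
        vector [- ws, - Rs / (\<sigma> * Ls), 0, Rs * Lm / (\<sigma> * Ls * Lr)],
        vector [Rr * Lm / (\<sigma> * Ls * Lr), 0, - Rr / (\<sigma> * Lr), ws],
        vector [0, Rr * Lm / (\<sigma> * Ls * Lr), - ws, - Rr / (\<sigma> * Lr)]])"

definition dfig_B :: "real^2^4" where
  "dfig_B = vector [vector [0, 0], vector [0, 0], vector [1, 0], vector [0, 1]]"

end

theory Submission
  imports Defs
begin

lemma vector_4 [simp]:
 "(vector [x,y,z,w] ::('a::zero)^4)$1 = x"
 "(vector [x,y,z,w] ::('a::zero)^4)$2 = y"
 "(vector [x,y,z,w] ::('a::zero)^4)$3 = z"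
 "(vector [x,y,z,w] ::('a::zero)^4)$4 = w"
  unfolding vector_def by simp_all

lemma det_complexify: "det (complexify M) = complex_of_real (det M)"
  unfolding det_def complexify_def by (simp add: of_real_sum of_real_prod)

lemma det_neg0:
  fixes X :: "'a::comm_ring_1^'n^'n"
  shows "det (- X) = (-1) ^ CARD('n) * det X"
proof -
  have "(- X) = (\<chi> i. (-1) *s (X$i))" by (simp add: vec_eq_iff)
  hence "det (- X) = (\<Prod>i\<in>(UNIV::'n set). -1) * det ((\<chi> i. X$i)::'a^'n^'n)" by (simp add: det_rows_mul)
  moreover have "((\<chi> i. X$i)::'a^'n^'n) = X" by (simp add: vec_eq_iff)
  ultimately show ?thesis by simp
qed

lemma stable_invertible: "asymp_stable M \<Longrightarrow> invertible M"
proof -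
  assume "asymp_stable M"
  hence "\<not> is_eigenvalue M 0" unfolding asymp_stable_def by force
  hence "det (- complexify M) \<noteq> 0" unfolding is_eigenvalue_def by simp
  hence "det (complexify M) \<noteq> 0"
    using det_neg0[of "complexify M"] by (auto simp del: mult_minus_left)
  hence "det M \<noteq> 0" by (simp add: det_complexify)
  thus ?thesis by (simp add: invertible_det_nz)
qed

theorem lemma1:
  fixes ws Rs Rr Ls Lr Lm :: real and K :: "real^4^2"
  assumes "ws > 0" "Rs > 0" "Rr > 0" "Ls > 0" "Lr > 0" "Lm > 0"
    and "Ls > Lm" "Lr > Lm"
    and "asymp_stable (dfig_A ws Rs Rr Ls Lr Lm - dfig_B ** K)"
  shows "let \<sigma> = 1 - Lm\<^sup>2 / (Ls * Lr);
             D = matrix_inv (dfig_A ws Rs Rr Ls Lr Lm - dfig_B ** K);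
             c = Lm / (\<sigma> * Ls * Lr);
             q1 = c * (D$1$3 * D$4$3 - D$2$3 * D$3$3);
             q2 = 1/2 * c * (D$1$3 * D$4$4 + D$1$4 * D$4$3 - D$2$3 * D$3$4 - D$2$4 * D$3$3);
             q3 = c * (D$1$4 * D$4$4 - D$2$4 * D$3$4)
         in pos_definite (vector [vector [q1, q2], vector [q2, q3]] :: real^2^2)"
proof -
  define M where "M = dfig_A ws Rs Rr Ls Lr Lm - dfig_B ** K"
  define D where "D = matrix_inv M"
  define \<sigma> where "\<sigma> = 1 - Lm\<^sup>2 / (Ls * Lr)"
  define a where "a = Rs / (\<sigma> * Ls)"
  define b where "b = Rs * Lm / (\<sigma> * Ls * Lr)"
  define c where "c = Lm / (\<sigma> * Ls * Lr)"
  have inv: "invertible M" using assms(9) stable_invertible M_def by simp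
  have MD: "M ** D = mat 1 \<and> D ** M = mat 1"
    using inv unfolding invertible_def D_def matrix_inv_def by (rule someI_ex)
  have "Lm * Lm < Ls * Lr" using assms by (intro mult_strict_mono) auto
  hence "Lm\<^sup>2 / (Ls * Lr) < 1" using assms by (simp add: power2_eq_square)
  hence sig: "\<sigma> > 0" unfolding \<sigma>_def by simp
  have bpos: "b > 0" unfolding b_def using sig assms by simp
  have cpos: "c > 0" unfolding c_def using sig assms by simp
  have B1: "dfig_B $ 1 = 0" "dfig_B $ 2 = 0" unfolding dfig_B_def by (simp_all add: vec_eq_iff forall_2)
  have BK: "(dfig_B ** K) $ 1 = 0" "(dfig_B ** K) $ 2 = 0"
    by (simp_all add: matrix_matrix_mult_def vec_eq_iff B1)
  have row1: "M $ 1 = vector [-a, ws, b, 0]" and row2: "M $ 2 = vector [-ws, -a, 0, b]"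
    unfolding M_def a_def b_def using BK by (simp_all add: dfig_A_def Let_def \<sigma>_def)
  have E: "(M ** D) $ i $ j = (if i = j then 1 else 0)" for i j using MD by (simp add: mat_def)
  have eq13: "-a * D$1$3 + ws * D$2$3 + b * D$3$3 = 0"
    using E[of 1 3] by (simp add: matrix_matrix_mult_def sum_4 row1)
  have eq14: "-a * D$1$4 + ws * D$2$4 + b * D$3$4 = 0"
    using E[of 1 4] by (simp add: matrix_matrix_mult_def sum_4 row1)
  have eq23: "-ws * D$1$3 - a * D$2$3 + b * D$4$3 = 0"
    using E[of 2 3] by (simp add: matrix_matrix_mult_def sum_4 row2)
  have eq24: "-ws * D$1$4 - a * D$2$4 + b * D$4$4 = 0"
    using E[of 2 4] by (simp add: matrix_matrix_mult_def sum_4 row2)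
  define q1 where "q1 = c * (D$1$3 * D$4$3 - D$2$3 * D$3$3)"
  define q2 where "q2 = 1/2 * c * (D$1$3 * D$4$4 + D$1$4 * D$4$3 - D$2$3 * D$3$4 - D$2$4 * D$3$3)"
  define q3 where "q3 = c * (D$1$4 * D$4$4 - D$2$4 * D$3$4)"
  define Q where "Q = (vector [vector [q1, q2], vector [q2, q3]] :: real^2^2)"
  have "pos_definite Q"
    unfolding pos_definite_def
  proof (intro conjI allI impI)
    show "transpose Q = Q" unfolding Q_def by (simp add: vec_eq_iff forall_2 transpose_def)
  next
    fix x :: "real^2" assume x0: "x \<noteq> 0"
    define u1 where "u1 = x$1"
    define u2 where "u2 = x$2"
    define y1 where "y1 = D$1$3 * u1 + D$1$4 * u2"
    define y2 where "y2 = D$2$3 * u1 + D$2$4 * u2"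
    define y3 where "y3 = D$3$3 * u1 + D$3$4 * u2"
    define y4 where "y4 = D$4$3 * u1 + D$4$4 * u2"
    have form: "x \<bullet> (Q *v x) = c * (y1 * y4 - y2 * y3)"
      unfolding Q_def inner_vec_def matrix_vector_mult_def q1_def q2_def q3_def y1_def y2_def y3_def y4_def u1_def u2_def
      by (simp add: sum_2 algebra_simps)
    have "b * y3 - (a * y1 - ws * y2) = u1 * (-a * D$1$3 + ws * D$2$3 + b * D$3$3) + u2 * (-a * D$1$4 + ws * D$2$4 + b * D$3$4)"
      unfolding y1_def y2_def y3_def by (simp add: algebra_simps)
    hence y3e: "b * y3 = a * y1 - ws * y2" using eq13 eq14 by simp
    have "b * y4 - (ws * y1 + a * y2) = u1 * (-ws * D$1$3 - a * D$2$3 + b * D$4$3) + u2 * (-ws * D$1$4 - a * D$2$4 + b * D$4$4)"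
      unfolding y1_def y2_def y4_def by (simp add: algebra_simps)
    hence y4e: "b * y4 = ws * y1 + a * y2" using eq23 eq24 by simp
    have key: "b * (y1 * y4 - y2 * y3) = ws * (y1\<^sup>2 + y2\<^sup>2)"
    proof -
      have "b * (y1 * y4 - y2 * y3) = y1 * (b * y4) - y2 * (b * y3)" by (simp add: algebra_simps)
      also have "\<dots> = y1 * (ws * y1 + a * y2) - y2 * (a * y1 - ws * y2)" by (simp only: y3e y4e)
      also have "\<dots> = ws * (y1\<^sup>2 + y2\<^sup>2)" by (simp add: algebra_simps power2_eq_square)
      finally show ?thesis .
    qed
    have nz: "y1\<^sup>2 + y2\<^sup>2 > 0"
    proof (rule ccontr)
      assume "\<not> y1\<^sup>2 + y2\<^sup>2 > 0"
      hence "y1 = 0" "y2 = 0" by (smt (verit) zero_le_power2 power2_less_eq_zero_iff)+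
      hence "y3 = 0" "y4 = 0" using y3e y4e bpos by auto
      define v where "v = (vector [0, 0, u1, u2] :: real^4)"
      have "D *v v = vector [y1, y2, y3, y4]"
        unfolding v_def y1_def y2_def y3_def y4_def
        by (simp add: vec_eq_iff forall_4 matrix_vector_mult_def sum_4)
      also have "\<dots> = 0" using \<open>y1 = 0\<close> \<open>y2 = 0\<close> \<open>y3 = 0\<close> \<open>y4 = 0\<close>
        by (simp add: vec_eq_iff forall_4)
      finally have "M *v (D *v v) = 0" by simp
      hence "v = 0" using MD by (simp add: matrix_vector_mul_assoc)
      hence "u1 = 0" "u2 = 0" unfolding v_def
        by (metis vector_4(3) zero_index, metis vector_4(4) zero_index)
      hence "x = 0" unfolding u1_def u2_def by (simp add: vec_eq_iff forall_2)
      thus False using x0 by simp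
    qed
    have "b * (y1 * y4 - y2 * y3) > 0" using key nz assms(1) by simp
    hence "y1 * y4 - y2 * y3 > 0" using bpos by (simp add: zero_less_mult_iff)
    thus "x \<bullet> (Q *v x) > 0" using form cpos by simp
  qed
  thus ?thesis unfolding Let_def Q_def q1_def q2_def q3_def c_def D_def M_def \<sigma>_def .
qed

end
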